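(* Let $\phi$ be a circuit all of whose constraints are windable. Then the signature $[\![\phi]\!]$ is windable.
   Context: For $x,y\in\{0,1\}^J$, $x\oplus y$ is coordinatewise addition mod 2, and $\mathbf S$ is the characteristic vector of $S\subseteq J$. For $z\in\{0,1\}^J$, $\mathrm{Match}'(z)$ is the set of partitions of $\{i:z_i=1\}$ into blocks of size 1 or 2. $F:\{0,1\}^J\to\mathbb{Q}_{\ge0}$ is windable if there exist $B(x,y,M)\ge0$ for all $x,y\in\{0,1\}^J$ and $M\in\mathrm{Match}'(x\oplus y)$ with (1) $F(x)F(y)=\sum_{M\in\mathrm{Match}'(x\oplus y)}B(x,y,M)$ for all $x,y$, and (2) $B(x,y,M)=B(x\oplus\mathbf S,y\oplus\mathbf S,M)$ for all $x,y$ and all $S\in M\in\mathrm{Match}'(x\oplus y)$. A circuit $\phi$ consists of: a finite set $J$ of incidences; a finite set $V$ of vertices with sets $J_v$ partitioning $J$; a set $A\subseteq J$ of external edges; a partition $E$ of $J\setminus A$ into pairs (internal edges); and constraints $F_v:\{0,1\}^{J_v}\to\mathbb{Q}_{\ge0}$. An assignment is $x\in\{0,1\}^J$ with $x_i=x_j$ for all $\{i,j\}\in E$; $\mathrm{wt}_\phi(x)=\prod_vF_v(x|_{J_v})$; the signature is $[\![\phi]\!]:\{0,1\}^A\to\mathbb{Q}_{\ge0}$, $[\![\phi]\!](x)=\sum\mathrm{wt}_\phi(x')$ over assignments $x'$ extending $x$. *)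

theory Defs
  imports Complex_Main
begin

text \<open>Vectors in {0,1}^J are represented by subsets of J (their support);
  coordinatewise addition mod 2 is symmetric difference, and the
  characteristic vector of S is S itself.\<close>

definition xor_set :: "'a set \<Rightarrow> 'a set \<Rightarrow> 'a set" where
  "xor_set x y = (x - y) \<union> (y - x)"

definition Match' :: "'a set \<Rightarrow> 'a set set set" where
  "Match' z = {M. (\<forall>S\<in>M. S \<noteq> {} \<and> (card S = 1 \<or> card S = 2))
                 \<and> (\<forall>S\<in>M. \<forall>T\<in>M. S \<noteq> T \<longrightarrow> S \<inter> T = {})
                 \<and> \<Union>M = z}"

definition windable :: "'a set \<Rightarrow> ('a set \<Rightarrow> rat) \<Rightarrow> bool" where
  "windable J F \<longleftrightarrow>
     (\<forall>x. x \<subseteq> J \<longrightarrow> F x \<ge> 0) \<and>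
     (\<exists>B :: 'a set \<Rightarrow> 'a set \<Rightarrow> 'a set set \<Rightarrow> rat.
        (\<forall>x y M. x \<subseteq> J \<longrightarrow> y \<subseteq> J \<longrightarrow> M \<in> Match' (xor_set x y) \<longrightarrow> B x y M \<ge> 0) \<and>
        (\<forall>x y. x \<subseteq> J \<longrightarrow> y \<subseteq> J \<longrightarrow>
            F x * F y = (\<Sum>M\<in>Match' (xor_set x y). B x y M)) \<and>
        (\<forall>x y M S. x \<subseteq> J \<longrightarrow> y \<subseteq> J \<longrightarrow> M \<in> Match' (xor_set x y) \<longrightarrow> S \<in> M \<longrightarrow>
            B x y M = B (xor_set x S) (xor_set y S) M))"

text \<open>A circuit: incidences J, vertices V with incidence sets Jv v partitioning J,
  external edges A \<subseteq> J, internal edges E partitioning J - A into pairs,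
  constraints F v : {0,1}^(Jv v) \<rightarrow> Q_{\<ge>0}.\<close>
definition circuit ::
  "'i set \<Rightarrow> 'v set \<Rightarrow> ('v \<Rightarrow> 'i set) \<Rightarrow> 'i set \<Rightarrow> 'i set set \<Rightarrow> ('v \<Rightarrow> 'i set \<Rightarrow> rat) \<Rightarrow> bool"
  where
  "circuit J V Jv A E F \<longleftrightarrow>
     finite J \<and> finite V \<and>
     (\<forall>v\<in>V. Jv v \<subseteq> J) \<and> (\<Union>v\<in>V. Jv v) = J \<and>
     (\<forall>v\<in>V. \<forall>w\<in>V. v \<noteq> w \<longrightarrow> Jv v \<inter> Jv w = {}) \<and>
     A \<subseteq> J \<and>
     (\<forall>e\<in>E. card e = 2) \<and>
     (\<forall>e\<in>E. \<forall>e'\<in>E. e \<noteq> e' \<longrightarrow> e \<inter> e' = {}) \<and>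
     \<Union>E = J - A \<and>
     (\<forall>v\<in>V. \<forall>x. x \<subseteq> Jv v \<longrightarrow> F v x \<ge> 0)"

definition assignment :: "'i set \<Rightarrow> 'i set set \<Rightarrow> 'i set \<Rightarrow> bool" where
  "assignment J E x \<longleftrightarrow> x \<subseteq> J \<and> (\<forall>e\<in>E. \<forall>i\<in>e. \<forall>j\<in>e. (i \<in> x \<longleftrightarrow> j \<in> x))"

definition wt :: "'v set \<Rightarrow> ('v \<Rightarrow> 'i set) \<Rightarrow> ('v \<Rightarrow> 'i set \<Rightarrow> rat) \<Rightarrow> 'i set \<Rightarrow> rat" where
  "wt V Jv F x = (\<Prod>v\<in>V. F v (x \<inter> Jv v))"

definition signature ::
  "'i set \<Rightarrow> 'v set \<Rightarrow> ('v \<Rightarrow> 'i set) \<Rightarrow> 'i set \<Rightarrow> 'i set set \<Rightarrow> ('v \<Rightarrow> 'i set \<Rightarrow> rat) \<Rightarrow> 'i set \<Rightarrow> rat"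
  where
  "signature J V Jv A E F a = (\<Sum>x\<in>{x. assignment J E x \<and> x \<inter> A = a}. wt V Jv F x)"

end

theory Submission
  imports Defs
begin


lemma windableI:
  fixes B :: "'a set \<Rightarrow> 'a set \<Rightarrow> 'a set set \<Rightarrow> rat"
  assumes "\<And>x. x \<subseteq> J \<Longrightarrow> F x \<ge> 0"
    and "\<And>x y M. x \<subseteq> J \<Longrightarrow> y \<subseteq> J \<Longrightarrow> M \<in> Match' (xor_set x y) \<Longrightarrow> B x y M \<ge> 0"
    and "\<And>x y. x \<subseteq> J \<Longrightarrow> y \<subseteq> J \<Longrightarrow> F x * F y = (\<Sum>M\<in>Match' (xor_set x y). B x y M)"
    and "\<And>x y M S. x \<subseteq> J \<Longrightarrow> y \<subseteq> J \<Longrightarrow> M \<in> Match' (xor_set x y) \<Longrightarrow> S \<in> M \<Longrightarrow> B x y M = B (xor_set x S) (xor_set y S) M"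
  shows "windable J F"
  unfolding windable_def
  apply (intro conjI allI impI)
   apply (simp add: assms(1))
  apply (rule exI[of _ B])
  apply (intro conjI allI impI)
  subgoal by (rule assms(2))
  subgoal by (rule assms(3))
  subgoal by (rule assms(4))
  done

lemma windableE:
  assumes "windable J F"
  obtains B :: "'a set \<Rightarrow> 'a set \<Rightarrow> 'a set set \<Rightarrow> rat" where
    "\<And>x. x \<subseteq> J \<Longrightarrow> F x \<ge> 0"
    and "\<And>x y M. x \<subseteq> J \<Longrightarrow> y \<subseteq> J \<Longrightarrow> M \<in> Match' (xor_set x y) \<Longrightarrow> B x y M \<ge> 0"
    and "\<And>x y. x \<subseteq> J \<Longrightarrow> y \<subseteq> J \<Longrightarrow> F x * F y = (\<Sum>M\<in>Match' (xor_set x y). B x y M)"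
    and "\<And>x y M S. x \<subseteq> J \<Longrightarrow> y \<subseteq> J \<Longrightarrow> M \<in> Match' (xor_set x y) \<Longrightarrow> S \<in> M \<Longrightarrow> B x y M = B (xor_set x S) (xor_set y S) M"
proof -
  have h1: "\<forall>x. x \<subseteq> J \<longrightarrow> F x \<ge> 0" using assms unfolding windable_def by (rule conjunct1)
  obtain B :: "'a set \<Rightarrow> 'a set \<Rightarrow> 'a set set \<Rightarrow> rat" where
    h: "(\<forall>x y M. x \<subseteq> J \<longrightarrow> y \<subseteq> J \<longrightarrow> M \<in> Match' (xor_set x y) \<longrightarrow> B x y M \<ge> 0) \<and>
        (\<forall>x y. x \<subseteq> J \<longrightarrow> y \<subseteq> J \<longrightarrow>
            F x * F y = (\<Sum>M\<in>Match' (xor_set x y). B x y M)) \<and>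
        (\<forall>x y M S. x \<subseteq> J \<longrightarrow> y \<subseteq> J \<longrightarrow> M \<in> Match' (xor_set x y) \<longrightarrow> S \<in> M \<longrightarrow>
            B x y M = B (xor_set x S) (xor_set y S) M)"
    using conjunct2[OF assms[unfolded windable_def]] by (rule exE)
  note h2 = conjunct1[OF h] and h3 = conjunct1[OF conjunct2[OF h]] and h4 = conjunct2[OF conjunct2[OF h]]
  show thesis
    apply (rule that[of B])
    subgoal by (rule h1[rule_format])
    subgoal by (rule h2[rule_format])
    subgoal by (rule h3[rule_format])
    subgoal by (rule h4[rule_format])
    done
qed

lemma windable_cong:
  assumes "windable J F" "\<And>x. x \<subseteq> J \<Longrightarrow> F x = G x"
  shows "windable J G"
proof -
  obtain B :: "'a set \<Rightarrow> 'a set \<Rightarrow> 'a set set \<Rightarrow> rat" where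
    B1: "\<And>x. x \<subseteq> J \<Longrightarrow> F x \<ge> 0"
    and B2: "\<And>x y M. x \<subseteq> J \<Longrightarrow> y \<subseteq> J \<Longrightarrow> M \<in> Match' (xor_set x y) \<Longrightarrow> B x y M \<ge> 0"
    and B3: "\<And>x y. x \<subseteq> J \<Longrightarrow> y \<subseteq> J \<Longrightarrow> F x * F y = (\<Sum>M\<in>Match' (xor_set x y). B x y M)"
    and B4: "\<And>x y M S. x \<subseteq> J \<Longrightarrow> y \<subseteq> J \<Longrightarrow> M \<in> Match' (xor_set x y) \<Longrightarrow> S \<in> M \<Longrightarrow> B x y M = B (xor_set x S) (xor_set y S) M"
    by (rule windableE[OF assms(1)]) (rule that, assumption+)
  show ?thesis
  proof (rule windableI[of J G B])
    show "G x \<ge> 0" if "x \<subseteq> J" for x using B1[OF that] assms(2)[OF that] by simp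
    show "\<And>x y M. x \<subseteq> J \<Longrightarrow> y \<subseteq> J \<Longrightarrow> M \<in> Match' (xor_set x y) \<Longrightarrow> B x y M \<ge> 0" by (rule B2)
    show "G x * G y = (\<Sum>M\<in>Match' (xor_set x y). B x y M)" if "x \<subseteq> J" "y \<subseteq> J" for x y
      using B3[OF that] assms(2)[OF that(1)] assms(2)[OF that(2)] by simp
    show "\<And>x y M S. x \<subseteq> J \<Longrightarrow> y \<subseteq> J \<Longrightarrow> M \<in> Match' (xor_set x y) \<Longrightarrow> S \<in> M \<Longrightarrow> B x y M = B (xor_set x S) (xor_set y S) M"
      by (rule B4)
  qed
qed

lemma xor_cancel[simp]: "xor_set (xor_set x S) (xor_set y S) = xor_set x y"
  unfolding xor_set_def by auto

lemma xor_sub: "x \<subseteq> J \<Longrightarrow> S \<subseteq> J \<Longrightarrow> xor_set x S \<subseteq> J"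
  unfolding xor_set_def by auto

lemma Match'_sub: "M \<in> Match' z \<Longrightarrow> S \<in> M \<Longrightarrow> S \<subseteq> z"
  unfolding Match'_def by auto

lemma Match'_finite: "finite z \<Longrightarrow> finite (Match' z)"
  by (rule finite_subset[of _ "Pow (Pow z)"]) (auto simp: Match'_def)

lemma Match'_empty: "Match' {} = {{}}"
  unfolding Match'_def by auto

lemma Match'_block:
  assumes "M \<in> Match' z" "S \<in> M"
  shows "S \<noteq> {}" "card S \<le> 2" "finite S" "card S \<ge> 1"
proof -
  have "S \<noteq> {} \<and> (card S = 1 \<or> card S = 2)" using assms unfolding Match'_def by auto
  then show "S \<noteq> {}" "card S \<le> 2" "card S \<ge> 1" by auto
  then show "finite S" using card_ge_0_finite by force
qed

lemma Match'_disj: "M \<in> Match' z \<Longrightarrow> S \<in> M \<Longrightarrow> T \<in> M \<Longrightarrow> S \<noteq> T \<Longrightarrow> S \<inter> T = {}"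
  unfolding Match'_def by auto

lemma Match'_Union: "M \<in> Match' z \<Longrightarrow> \<Union>M = z"
  unfolding Match'_def by auto

lemma Match'I:
  assumes "\<And>S. S \<in> M \<Longrightarrow> S \<noteq> {} \<and> (card S = 1 \<or> card S = 2)"
    "\<And>S T. S \<in> M \<Longrightarrow> T \<in> M \<Longrightarrow> S \<noteq> T \<Longrightarrow> S \<inter> T = {}"
    "\<Union>M = z"
  shows "M \<in> Match' z"
  using assms unfolding Match'_def by auto




lemma tensor:
  fixes A1 A2 :: "'a set" and G1 G2 :: "'a set \<Rightarrow> rat"
  assumes fin: "finite A1" "finite A2" and disj: "A1 \<inter> A2 = {}"
    and w1: "windable A1 G1" and w2: "windable A2 G2"
  shows "windable (A1 \<union> A2) (\<lambda>a. G1 (a \<inter> A1) * G2 (a \<inter> A2))"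
proof -
  obtain B1 :: "'a set \<Rightarrow> 'a set \<Rightarrow> 'a set set \<Rightarrow> rat" where
    P1: "\<And>x. x \<subseteq> A1 \<Longrightarrow> G1 x \<ge> 0"
    and N1: "\<And>x y M. x \<subseteq> A1 \<Longrightarrow> y \<subseteq> A1 \<Longrightarrow> M \<in> Match' (xor_set x y) \<Longrightarrow> B1 x y M \<ge> 0"
    and S1: "\<And>x y. x \<subseteq> A1 \<Longrightarrow> y \<subseteq> A1 \<Longrightarrow> G1 x * G1 y = (\<Sum>M\<in>Match' (xor_set x y). B1 x y M)"
    and I1: "\<And>x y M S. x \<subseteq> A1 \<Longrightarrow> y \<subseteq> A1 \<Longrightarrow> M \<in> Match' (xor_set x y) \<Longrightarrow> S \<in> M \<Longrightarrow> B1 x y M = B1 (xor_set x S) (xor_set y S) M"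
    by (rule windableE[OF w1]) (rule that, assumption+)
  obtain B2 :: "'a set \<Rightarrow> 'a set \<Rightarrow> 'a set set \<Rightarrow> rat" where
    P2: "\<And>x. x \<subseteq> A2 \<Longrightarrow> G2 x \<ge> 0"
    and N2: "\<And>x y M. x \<subseteq> A2 \<Longrightarrow> y \<subseteq> A2 \<Longrightarrow> M \<in> Match' (xor_set x y) \<Longrightarrow> B2 x y M \<ge> 0"
    and S2: "\<And>x y. x \<subseteq> A2 \<Longrightarrow> y \<subseteq> A2 \<Longrightarrow> G2 x * G2 y = (\<Sum>M\<in>Match' (xor_set x y). B2 x y M)"
    and I2: "\<And>x y M S. x \<subseteq> A2 \<Longrightarrow> y \<subseteq> A2 \<Longrightarrow> M \<in> Match' (xor_set x y) \<Longrightarrow> S \<in> M \<Longrightarrow> B2 x y M = B2 (xor_set x S) (xor_set y S) M"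
    by (rule windableE[OF w2]) (rule that, assumption+)
  define good where "good M \<longleftrightarrow> (\<forall>S\<in>M. S \<subseteq> A1 \<or> S \<subseteq> A2)" for M :: "'a set set"
  define B where "B x y M = (if good M then B1 (x \<inter> A1) (y \<inter> A1) {S\<in>M. S \<subseteq> A1} * B2 (x \<inter> A2) (y \<inter> A2) {S\<in>M. S \<subseteq> A2} else 0)" for x y M
  have xr: "xor_set (x \<inter> A) (y \<inter> A) = xor_set x y \<inter> A" for x y A :: "'a set"
    unfolding xor_set_def by auto
  have split1: "{S\<in>M. S \<subseteq> A1} \<in> Match' (xor_set (x \<inter> A1) (y \<inter> A1))"
    if "M \<in> Match' (xor_set x y)" "good M" for x y M
  proof (rule Match'I)
    show "\<And>S. S \<in> {S \<in> M. S \<subseteq> A1} \<Longrightarrow> S \<noteq> {} \<and> (card S = 1 \<or> card S = 2)"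
      using that(1) unfolding Match'_def by auto
    show "\<And>S T. S \<in> {S \<in> M. S \<subseteq> A1} \<Longrightarrow> T \<in> {S \<in> M. S \<subseteq> A1} \<Longrightarrow> S \<noteq> T \<Longrightarrow> S \<inter> T = {}"
      using that(1) unfolding Match'_def by auto
    show "\<Union> {S \<in> M. S \<subseteq> A1} = xor_set (x \<inter> A1) (y \<inter> A1)"
    proof -
      have "\<Union>M = xor_set x y" by (rule Match'_Union[OF that(1)])
      moreover have "\<Union>{S\<in>M. S \<subseteq> A1} = \<Union>M \<inter> A1"
        using that(2) disj unfolding good_def by blast
      ultimately show ?thesis unfolding xr by simp
    qed
  qed
  have split2: "{S\<in>M. S \<subseteq> A2} \<in> Match' (xor_set (x \<inter> A2) (y \<inter> A2))"
    if "M \<in> Match' (xor_set x y)" "good M" for x y M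
  proof (rule Match'I)
    show "\<And>S. S \<in> {S \<in> M. S \<subseteq> A2} \<Longrightarrow> S \<noteq> {} \<and> (card S = 1 \<or> card S = 2)"
      using that(1) unfolding Match'_def by auto
    show "\<And>S T. S \<in> {S \<in> M. S \<subseteq> A2} \<Longrightarrow> T \<in> {S \<in> M. S \<subseteq> A2} \<Longrightarrow> S \<noteq> T \<Longrightarrow> S \<inter> T = {}"
      using that(1) unfolding Match'_def by auto
    show "\<Union> {S \<in> M. S \<subseteq> A2} = xor_set (x \<inter> A2) (y \<inter> A2)"
    proof -
      have "\<Union>M = xor_set x y" by (rule Match'_Union[OF that(1)])
      moreover have "\<Union>{S\<in>M. S \<subseteq> A2} = \<Union>M \<inter> A2"
        using that(2) disj unfolding good_def by blast
      ultimately show ?thesis unfolding xr by simp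
    qed
  qed
  have comb: "M1 \<union> M2 \<in> Match' (xor_set x y) \<and> good (M1 \<union> M2) \<and> {S\<in>M1 \<union> M2. S \<subseteq> A1} = M1 \<and> {S\<in>M1 \<union> M2. S \<subseteq> A2} = M2"
    if "M1 \<in> Match' (xor_set (x \<inter> A1) (y \<inter> A1))" "M2 \<in> Match' (xor_set (x \<inter> A2) (y \<inter> A2))"
      "x \<subseteq> A1 \<union> A2" "y \<subseteq> A1 \<union> A2" for x y M1 M2
  proof -
    have s1: "S \<subseteq> A1 \<and> S \<noteq> {}" if "S \<in> M1" for S
      using Match'_sub[OF \<open>M1 \<in> _\<close> that] Match'_block(1)[OF \<open>M1 \<in> _\<close> that] unfolding xr by auto
    have s2: "S \<subseteq> A2 \<and> S \<noteq> {}" if "S \<in> M2" for S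
      using Match'_sub[OF \<open>M2 \<in> _\<close> that] Match'_block(1)[OF \<open>M2 \<in> _\<close> that] unfolding xr by auto
    have m: "M1 \<union> M2 \<in> Match' (xor_set x y)"
    proof (rule Match'I)
      show "\<And>S. S \<in> M1 \<union> M2 \<Longrightarrow> S \<noteq> {} \<and> (card S = 1 \<or> card S = 2)"
        using that(1,2) unfolding Match'_def by auto
      show "S \<inter> T = {}" if "S \<in> M1 \<union> M2" "T \<in> M1 \<union> M2" "S \<noteq> T" for S T
        using that Match'_disj[OF \<open>M1 \<in> _\<close>] Match'_disj[OF \<open>M2 \<in> _\<close>] s1 s2 disj by blast
      have "\<Union>M1 = xor_set x y \<inter> A1" "\<Union>M2 = xor_set x y \<inter> A2"
        using Match'_Union[OF that(1)] Match'_Union[OF that(2)] unfolding xr by auto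
      moreover have "xor_set x y \<subseteq> A1 \<union> A2" using that(3,4) unfolding xor_set_def by auto
      ultimately show "\<Union>(M1 \<union> M2) = xor_set x y" by auto
    qed
    have "{S\<in>M1 \<union> M2. S \<subseteq> A1} = M1" using s1 s2 disj by blast
    moreover have "{S\<in>M1 \<union> M2. S \<subseteq> A2} = M2" using s1 s2 disj by blast
    moreover have "good (M1 \<union> M2)" using s1 s2 unfolding good_def by blast
    ultimately show ?thesis using m by blast
  qed
  show ?thesis
  proof (rule windableI[of _ _ B])
    show "0 \<le> G1 (x \<inter> A1) * G2 (x \<inter> A2)" if "x \<subseteq> A1 \<union> A2" for x
      using P1 P2 by auto
    show "0 \<le> B x y M" if "x \<subseteq> A1 \<union> A2" "y \<subseteq> A1 \<union> A2" "M \<in> Match' (xor_set x y)" for x y M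
      using N1[OF _ _ split1[OF that(3)]] N2[OF _ _ split2[OF that(3)]] unfolding B_def by auto
    show "G1 (x \<inter> A1) * G2 (x \<inter> A2) * (G1 (y \<inter> A1) * G2 (y \<inter> A2)) = (\<Sum>M\<in>Match' (xor_set x y). B x y M)"
      if xy: "x \<subseteq> A1 \<union> A2" "y \<subseteq> A1 \<union> A2" for x y
    proof -
      have fz: "finite (xor_set x y)" using xy fin unfolding xor_set_def
        by (meson finite_Diff finite_Un finite_subset)
      have "(\<Sum>M\<in>Match' (xor_set x y). B x y M) = (\<Sum>M\<in>{M\<in>Match' (xor_set x y). good M}. B x y M)"
        by (rule sum.mono_neutral_right) (auto simp: Match'_finite[OF fz] B_def)
      also have "\<dots> = (\<Sum>p\<in>Match' (xor_set (x \<inter> A1) (y \<inter> A1)) \<times> Match' (xor_set (x \<inter> A2) (y \<inter> A2)).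
                          B1 (x \<inter> A1) (y \<inter> A1) (fst p) * B2 (x \<inter> A2) (y \<inter> A2) (snd p))"
      proof (rule sum.reindex_bij_witness[of _ "\<lambda>p. fst p \<union> snd p" "\<lambda>M. ({S\<in>M. S \<subseteq> A1}, {S\<in>M. S \<subseteq> A2})"])
        show "fst (({S \<in> M. S \<subseteq> A1}, {S \<in> M. S \<subseteq> A2})) \<union> snd (({S \<in> M. S \<subseteq> A1}, {S \<in> M. S \<subseteq> A2})) = M"
          if "M \<in> {M \<in> Match' (xor_set x y). good M}" for M
          using that unfolding good_def by auto
        show "({S \<in> M. S \<subseteq> A1}, {S \<in> M. S \<subseteq> A2}) \<in> Match' (xor_set (x \<inter> A1) (y \<inter> A1)) \<times> Match' (xor_set (x \<inter> A2) (y \<inter> A2))"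
          if "M \<in> {M \<in> Match' (xor_set x y). good M}" for M
          using that split1 split2 by auto
        show "({S \<in> fst p \<union> snd p. S \<subseteq> A1}, {S \<in> fst p \<union> snd p. S \<subseteq> A2}) = p"
          if "p \<in> Match' (xor_set (x \<inter> A1) (y \<inter> A1)) \<times> Match' (xor_set (x \<inter> A2) (y \<inter> A2))" for p
          using that comb[OF _ _ xy] by (cases p) auto
        show "fst p \<union> snd p \<in> {M \<in> Match' (xor_set x y). good M}"
          if "p \<in> Match' (xor_set (x \<inter> A1) (y \<inter> A1)) \<times> Match' (xor_set (x \<inter> A2) (y \<inter> A2))" for p
          using that comb[OF _ _ xy] by (cases p) auto
        show "B1 (x \<inter> A1) (y \<inter> A1) (fst ({S \<in> M. S \<subseteq> A1}, {S \<in> M. S \<subseteq> A2})) *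
              B2 (x \<inter> A2) (y \<inter> A2) (snd ({S \<in> M. S \<subseteq> A1}, {S \<in> M. S \<subseteq> A2})) = B x y M"
          if "M \<in> {M \<in> Match' (xor_set x y). good M}" for M
          using that unfolding B_def by auto
      qed
      also have "\<dots> = (\<Sum>M1\<in>Match' (xor_set (x \<inter> A1) (y \<inter> A1)). B1 (x \<inter> A1) (y \<inter> A1) M1) *
                      (\<Sum>M2\<in>Match' (xor_set (x \<inter> A2) (y \<inter> A2)). B2 (x \<inter> A2) (y \<inter> A2) M2)"
        by (simp add: sum_product sum.cartesian_product case_prod_beta)
      also have "\<dots> = G1 (x \<inter> A1) * G1 (y \<inter> A1) * (G2 (x \<inter> A2) * G2 (y \<inter> A2))"
        using S1 S2 by auto
      finally show ?thesis by (simp add: algebra_simps)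
    qed
    show "B x y M = B (xor_set x S) (xor_set y S) M"
      if xy: "x \<subseteq> A1 \<union> A2" "y \<subseteq> A1 \<union> A2" and M: "M \<in> Match' (xor_set x y)" and S: "S \<in> M" for x y M S
    proof (cases "good M")
      case False then show ?thesis unfolding B_def by simp
    next
      case True
      have m1: "{S\<in>M. S \<subseteq> A1} \<in> Match' (xor_set (x \<inter> A1) (y \<inter> A1))" using split1[OF M True] .
      have m2: "{S\<in>M. S \<subseteq> A2} \<in> Match' (xor_set (x \<inter> A2) (y \<inter> A2))" using split2[OF M True] .
      have xa: "xor_set x S \<inter> A = xor_set (x \<inter> A) (S \<inter> A)" for x A unfolding xor_set_def by auto
      from True S have "S \<subseteq> A1 \<or> S \<subseteq> A2" unfolding good_def by auto
      then show ?thesis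
      proof
        assume s: "S \<subseteq> A1"
        then have "S \<inter> A2 = {}" "S \<inter> A1 = S" using disj by auto
        moreover have "xor_set z {} = z" for z :: "'a set" unfolding xor_set_def by auto
        ultimately show ?thesis unfolding B_def xa using I1[OF _ _ m1, of S] s S True by auto
      next
        assume s: "S \<subseteq> A2"
        then have "S \<inter> A1 = {}" "S \<inter> A2 = S" using disj by auto
        moreover have "xor_set z {} = z" for z :: "'a set" unfolding xor_set_def by auto
        ultimately show ?thesis unfolding B_def xa using I2[OF _ _ m2, of S] s S True by auto
      qed
    qed
  qed
qed




definition red :: "'a \<Rightarrow> 'a \<Rightarrow> 'a set set \<Rightarrow> 'a set set" where
  "red i j M = {S\<in>M. i \<notin> S \<and> j \<notin> S} \<union>
     (if \<Union>{S\<in>M. i \<in> S \<or> j \<in> S} - {i,j} = {} then {} else {\<Union>{S\<in>M. i \<in> S \<or> j \<in> S} - {i,j}})"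

lemma red_Union: "\<Union>(red i j M) = \<Union>M - {i,j}"
  unfolding red_def by auto

lemma red_id:
  assumes "M \<in> Match' w" "i \<notin> w" "j \<notin> w"
  shows "red i j M = M"
proof -
  have "\<And>S. S \<in> M \<Longrightarrow> i \<notin> S \<and> j \<notin> S" using Match'_sub[OF assms(1)] assms(2,3) by blast
  then have e1: "{S\<in>M. i \<notin> S \<and> j \<notin> S} = M" and e2: "{S\<in>M. i \<in> S \<or> j \<in> S} = {}" by auto
  show ?thesis unfolding red_def e1 e2 by simp
qed

lemma red_blocks:
  assumes M: "M \<in> Match' z" and "i \<in> z" "j \<in> z"
  obtains Bi Bj where "Bi \<in> M" "Bj \<in> M" "i \<in> Bi" "j \<in> Bj"
    "{S\<in>M. i \<in> S \<or> j \<in> S} = {Bi, Bj}" "Bi = Bj \<or> Bi \<inter> Bj = {}"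
proof -
  have U: "\<Union>M = z" by (rule Match'_Union[OF M])
  obtain Bi where Bi: "Bi \<in> M" "i \<in> Bi" using U assms(2) by blast
  obtain Bj where Bj: "Bj \<in> M" "j \<in> Bj" using U assms(3) by blast
  have "S = Bi" if "S \<in> M" "i \<in> S" for S
    using Match'_disj[OF M that(1) Bi(1)] that(2) Bi(2) by blast
  moreover have "S = Bj" if "S \<in> M" "j \<in> S" for S
    using Match'_disj[OF M that(1) Bj(1)] that(2) Bj(2) by blast
  ultimately have "{S\<in>M. i \<in> S \<or> j \<in> S} = {Bi, Bj}" using Bi Bj by blast
  moreover have "Bi = Bj \<or> Bi \<inter> Bj = {}" using Match'_disj[OF M Bi(1) Bj(1)] by blast
  ultimately show ?thesis using that Bi Bj by blast
qed

lemma red_Match: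
  assumes M: "M \<in> Match' z" and ij: "i \<in> z" "j \<in> z" "i \<noteq> j"
  shows "red i j M \<in> Match' (z - {i,j})"
proof -
  obtain Bi Bj where B: "Bi \<in> M" "Bj \<in> M" "i \<in> Bi" "j \<in> Bj"
    and K: "{S\<in>M. i \<in> S \<or> j \<in> S} = {Bi, Bj}" and D: "Bi = Bj \<or> Bi \<inter> Bj = {}"
    using red_blocks[OF M ij(1,2)] by blast
  define U where "U = (Bi \<union> Bj) - {i,j}"
  have R: "red i j M = {S\<in>M. i \<notin> S \<and> j \<notin> S} \<union> (if U = {} then {} else {U})"
    unfolding red_def K U_def by simp
  have fBi: "finite Bi" "card Bi \<le> 2" using Match'_block[OF M B(1)] by auto
  have fBj: "finite Bj" "card Bj \<le> 2" using Match'_block[OF M B(2)] by auto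
  have Usub: "U \<subseteq> (Bi - {i}) \<union> (Bj - {j})" unfolding U_def by auto
  have fU: "finite U" using Usub fBi fBj by (meson finite_Diff finite_Un finite_subset)
  have c1: "card (Bi - {i}) \<le> 1" using fBi B(3) by simp
  have c2: "card (Bj - {j}) \<le> 1" using fBj B(4) by simp
  have "card U \<le> card ((Bi - {i}) \<union> (Bj - {j}))"
    by (rule card_mono) (use fBi fBj Usub in auto)
  also have "\<dots> \<le> card (Bi - {i}) + card (Bj - {j})" by (rule card_Un_le)
  finally have cU: "card U \<le> 2" using c1 c2 by linarith
  show ?thesis
  proof (rule Match'I)
    fix S assume S: "S \<in> red i j M"
    show "S \<noteq> {} \<and> (card S = 1 \<or> card S = 2)"
    proof (cases "S \<in> M")
      case True then show ?thesis using M unfolding Match'_def by auto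
    next
      case False
      then have "S = U" "U \<noteq> {}" using S unfolding R by (auto split: if_splits)
      moreover have "card U \<noteq> 0" using fU \<open>U \<noteq> {}\<close> by simp
      ultimately show ?thesis using cU by auto
    qed
  next
    fix S T assume S: "S \<in> red i j M" and T: "T \<in> red i j M" and ST: "S \<noteq> T"
    have oldU: "X \<inter> U = {}" if "X \<in> M" "i \<notin> X" "j \<notin> X" for X
    proof -
      have "X \<noteq> Bi" "X \<noteq> Bj" using that B by auto
      then have "X \<inter> Bi = {}" "X \<inter> Bj = {}" using Match'_disj[OF M that(1) B(1)] Match'_disj[OF M that(1) B(2)] by auto
      then show ?thesis unfolding U_def by auto
    qed
    show "S \<inter> T = {}"
    proof (cases "S \<in> M \<and> i \<notin> S \<and> j \<notin> S")
      case sM: True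
      show ?thesis
      proof (cases "T \<in> M \<and> i \<notin> T \<and> j \<notin> T")
        case True then show ?thesis using sM ST Match'_disj[OF M] by blast
      next
        case False
        then have "T = U" using T unfolding R by (auto split: if_splits)
        then show ?thesis using oldU sM by blast
      qed
    next
      case False
      then have sU: "S = U" using S unfolding R by (auto split: if_splits)
      then have "T \<noteq> U" using ST by simp
      then have "T \<in> M \<and> i \<notin> T \<and> j \<notin> T" using T unfolding R by (auto split: if_splits)
      then show ?thesis using oldU sU by blast
    qed
  next
    show "\<Union>(red i j M) = z - {i,j}" using red_Union Match'_Union[OF M] by metis
  qed
qed




lemma xor_xor[simp]: "xor_set (xor_set c K) K = c"
  unfolding xor_set_def by auto

lemma contract:
  fixes A :: "'a set" and G :: "'a set \<Rightarrow> rat"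
  assumes fin: "finite A" and w: "windable A G" and ij: "i \<in> A" "j \<in> A" "i \<noteq> j"
  shows "windable (A - {i,j}) (\<lambda>a. G a + G (a \<union> {i,j}))"
proof -
  obtain B :: "'a set \<Rightarrow> 'a set \<Rightarrow> 'a set set \<Rightarrow> rat" where
    P: "\<And>x. x \<subseteq> A \<Longrightarrow> G x \<ge> 0"
    and N: "\<And>x y M. x \<subseteq> A \<Longrightarrow> y \<subseteq> A \<Longrightarrow> M \<in> Match' (xor_set x y) \<Longrightarrow> B x y M \<ge> 0"
    and S: "\<And>x y. x \<subseteq> A \<Longrightarrow> y \<subseteq> A \<Longrightarrow> G x * G y = (\<Sum>M\<in>Match' (xor_set x y). B x y M)"
    and I: "\<And>x y M S. x \<subseteq> A \<Longrightarrow> y \<subseteq> A \<Longrightarrow> M \<in> Match' (xor_set x y) \<Longrightarrow> S \<in> M \<Longrightarrow> B x y M = B (xor_set x S) (xor_set y S) M"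
    by (rule windableE[OF w]) (rule that, assumption+)
  define C :: "'a set set" where "C = {{}, {i,j}}"
  define TT where "TT a b = (SIGMA c:C. SIGMA d:C. Match' (xor_set (a \<union> c) (b \<union> d)))" for a b
  define f where "f a b t = B (a \<union> fst t) (b \<union> fst (snd t)) (snd (snd t))" for a b t
  define BH where "BH a b M' = (\<Sum>t\<in>{t\<in>TT a b. red i j (snd (snd t)) = M'}. f a b t)" for a b M'
  have finC: "finite C" unfolding C_def by simp
  have Csub: "c \<subseteq> {i,j}" if "c \<in> C" for c using that unfolding C_def by auto
  have Cxor: "xor_set c {i,j} \<in> C" if "c \<in> C" for c using that unfolding C_def xor_set_def by auto
  have Ceq: "xor_set c {i,j} = xor_set d {i,j} \<longleftrightarrow> c = d" for c d
    by (metis xor_xor)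
  have xcd: "xor_set (a \<union> c) (b \<union> d) = xor_set a b \<union> (if c = d then {} else {i,j})"
    if "a \<subseteq> A - {i,j}" "b \<subseteq> A - {i,j}" "c \<in> C" "d \<in> C" for a b c d
    using that ij(3) unfolding C_def xor_set_def by auto
  have xab: "xor_set a b \<subseteq> A - {i,j}" if "a \<subseteq> A - {i,j}" "b \<subseteq> A - {i,j}" for a b
    using that unfolding xor_set_def by auto
  have sub: "a \<union> c \<subseteq> A" if "a \<subseteq> A - {i,j}" "c \<in> C" for a c
    using that ij unfolding C_def by auto
  have finX: "finite (xor_set (a \<union> c) (b \<union> d))" if "a \<subseteq> A - {i,j}" "b \<subseteq> A - {i,j}" "c \<in> C" "d \<in> C" for a b c d
    using xor_sub[OF sub[OF that(1,3)] sub[OF that(2,4)]] fin by (rule finite_subset)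
  have finTT: "finite (TT a b)" if "a \<subseteq> A - {i,j}" "b \<subseteq> A - {i,j}" for a b
    unfolding TT_def using finC Match'_finite[OF finX[OF that]] by (intro finite_SigmaI) auto
  have redM: "red i j M \<in> Match' (xor_set a b)"
    if ab: "a \<subseteq> A - {i,j}" "b \<subseteq> A - {i,j}" and cd: "c \<in> C" "d \<in> C"
      and M: "M \<in> Match' (xor_set (a \<union> c) (b \<union> d))" for a b c d M
  proof (cases "c = d")
    case True
    then have "M \<in> Match' (xor_set a b)" using M xcd[OF ab cd] by simp
    moreover have "i \<notin> xor_set a b" "j \<notin> xor_set a b" using xab[OF ab] by auto
    ultimately show ?thesis using red_id by metis
  next
    case False
    then have M2: "M \<in> Match' (xor_set a b \<union> {i,j})" using M xcd[OF ab cd] by simp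
    have "red i j M \<in> Match' ((xor_set a b \<union> {i,j}) - {i,j})"
      by (rule red_Match[OF M2]) (use ij(3) in auto)
    moreover have "(xor_set a b \<union> {i,j}) - {i,j} = xor_set a b" using xab[OF ab] by auto
    ultimately show ?thesis by simp
  qed
  show ?thesis
  proof (rule windableI[of _ _ BH])
    show "0 \<le> G a + G (a \<union> {i,j})" if "a \<subseteq> A - {i,j}" for a
    proof -
      have "a \<subseteq> A" "a \<union> {i,j} \<subseteq> A" using that ij by auto
      then show ?thesis by (intro add_nonneg_nonneg P)
    qed
    show "0 \<le> BH a b M'" if ab: "a \<subseteq> A - {i,j}" "b \<subseteq> A - {i,j}" and "M' \<in> Match' (xor_set a b)" for a b M'
      unfolding BH_def f_def
    proof (rule sum_nonneg)
      fix t assume "t \<in> {t \<in> TT a b. red i j (snd (snd t)) = M'}"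
      then have "fst t \<in> C" "fst (snd t) \<in> C" "snd (snd t) \<in> Match' (xor_set (a \<union> fst t) (b \<union> fst (snd t)))"
        unfolding TT_def by auto
      then show "0 \<le> B (a \<union> fst t) (b \<union> fst (snd t)) (snd (snd t))"
        using N[OF sub[OF ab(1)] sub[OF ab(2)]] by simp
    qed
    show "(G a + G (a \<union> {i,j})) * (G b + G (b \<union> {i,j})) = (\<Sum>M'\<in>Match' (xor_set a b). BH a b M')"
      if ab: "a \<subseteq> A - {i,j}" "b \<subseteq> A - {i,j}" for a b
    proof -
      have "(\<Sum>M'\<in>Match' (xor_set a b). BH a b M') = (\<Sum>t\<in>TT a b. f a b t)"
        unfolding BH_def
      proof (rule sum.group)
        show "finite (TT a b)" by (rule finTT[OF ab])
        show "finite (Match' (xor_set a b))" using xab[OF ab] fin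
          by (intro Match'_finite) (meson finite_Diff finite_subset)
        show "(\<lambda>t. red i j (snd (snd t))) ` TT a b \<subseteq> Match' (xor_set a b)"
        proof (rule image_subsetI)
          fix t assume "t \<in> TT a b"
          then obtain c d M where "t = (c, d, M)" "c \<in> C" "d \<in> C" "M \<in> Match' (xor_set (a \<union> c) (b \<union> d))"
            unfolding TT_def by (cases t) auto
          then show "red i j (snd (snd t)) \<in> Match' (xor_set a b)" using redM[OF ab] by simp
        qed
      qed
      also have "\<dots> = (\<Sum>c\<in>C. \<Sum>d\<in>C. \<Sum>M\<in>Match' (xor_set (a \<union> c) (b \<union> d)). f a b (c, d, M))"
      proof -
        have fin1: "finite (Match' (xor_set (a \<union> c) (b \<union> d)))" if "c \<in> C" "d \<in> C" for c d
          by (rule Match'_finite[OF finX[OF ab that]])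
        have fin2: "finite (SIGMA d:C. Match' (xor_set (a \<union> c) (b \<union> d)))" if "c \<in> C" for c
          using fin1[OF that] finC by (intro finite_SigmaI) auto
        have e1: "(\<Sum>c\<in>C. \<Sum>p\<in>(SIGMA d:C. Match' (xor_set (a \<union> c) (b \<union> d))). f a b (c, p))
            = (\<Sum>(c,p)\<in>TT a b. f a b (c, p))"
          unfolding TT_def by (rule sum.Sigma[OF finC]) (use fin2 in blast)
        have e2: "(\<Sum>d\<in>C. \<Sum>M\<in>Match' (xor_set (a \<union> c) (b \<union> d)). f a b (c, d, M))
            = (\<Sum>(d,M)\<in>(SIGMA d:C. Match' (xor_set (a \<union> c) (b \<union> d))). f a b (c, d, M))" if "c \<in> C" for c
          by (rule sum.Sigma[OF finC]) (use fin1 that in blast)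
        have e3: "(\<lambda>(c,p). f a b (c, p)) = f a b" by auto
        have e4: "(\<lambda>(d,M). f a b (c, d, M)) = (\<lambda>p. f a b (c, p))" for c by auto
        have "(\<Sum>c\<in>C. \<Sum>d\<in>C. \<Sum>M\<in>Match' (xor_set (a \<union> c) (b \<union> d)). f a b (c, d, M))
           = (\<Sum>c\<in>C. \<Sum>p\<in>(SIGMA d:C. Match' (xor_set (a \<union> c) (b \<union> d))). f a b (c, p))"
          by (rule sum.cong[OF refl]) (simp only: e2 e4)
        then show ?thesis unfolding e1 e3 by simp
      qed
      also have "\<dots> = (\<Sum>c\<in>C. \<Sum>d\<in>C. G (a \<union> c) * G (b \<union> d))"
        unfolding f_def by (intro sum.cong refl) (simp add: S[OF sub[OF ab(1)] sub[OF ab(2)]])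
      also have "\<dots> = (\<Sum>c\<in>C. G (a \<union> c)) * (\<Sum>d\<in>C. G (b \<union> d))"
        by (simp add: sum_product)
      also have "\<dots> = (G a + G (a \<union> {i,j})) * (G b + G (b \<union> {i,j}))"
        unfolding C_def by simp
      finally show ?thesis by simp
    qed
    show "BH a b M' = BH (xor_set a S) (xor_set b S) M'"
      if ab: "a \<subseteq> A - {i,j}" "b \<subseteq> A - {i,j}" and M': "M' \<in> Match' (xor_set a b)" and SM': "S \<in> M'" for a b M' S
    proof -
      have Ssub: "S \<subseteq> A - {i,j}" using Match'_sub[OF M' SM'] xab[OF ab] by auto
      define a' where "a' = xor_set a S"
      define b' where "b' = xor_set b S"
      have ab': "a' \<subseteq> A - {i,j}" "b' \<subseteq> A - {i,j}" using ab Ssub unfolding a'_def b'_def xor_set_def by auto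
      have xab': "xor_set a' b' = xor_set a b" unfolding a'_def b'_def by simp
      have TTeq: "TT a' b' = TT a b"
        unfolding TT_def using xcd[OF ab] xcd[OF ab'] xab' by (auto intro!: Sigma_cong)
      define Tm where "Tm = {t\<in>TT a b. red i j (snd (snd t)) = M'}"
      define \<sigma> where "\<sigma> t = (if S \<in> snd (snd t) then t else (xor_set (fst t) {i,j}, xor_set (fst (snd t)) {i,j}, snd (snd t)))" for t :: "'a set \<times> 'a set \<times> 'a set set"
      have Tm_mem: "t \<in> Tm \<longleftrightarrow> fst t \<in> C \<and> fst (snd t) \<in> C \<and> snd (snd t) \<in> Match' (xor_set (a \<union> fst t) (b \<union> fst (snd t))) \<and> red i j (snd (snd t)) = M'" for t
        unfolding Tm_def TT_def by (cases t) auto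
      have \<sigma>\<sigma>: "\<sigma> (\<sigma> t) = t" for t unfolding \<sigma>_def by auto
      have \<sigma>T: "\<sigma> t \<in> Tm" if "t \<in> Tm" for t
      proof (cases "S \<in> snd (snd t)")
        case True then show ?thesis using that unfolding \<sigma>_def by simp
      next
        case False
        obtain c d M where t: "t = (c, d, M)" by (cases t) auto
        have cd: "c \<in> C" "d \<in> C" and M: "M \<in> Match' (xor_set (a \<union> c) (b \<union> d))" and r: "red i j M = M'"
          using that unfolding Tm_mem t by auto
        have cd': "xor_set c {i,j} \<in> C" "xor_set d {i,j} \<in> C" using Cxor cd by auto
        have "xor_set (a \<union> xor_set c {i,j}) (b \<union> xor_set d {i,j}) = xor_set (a \<union> c) (b \<union> d)"
          using xcd[OF ab cd] xcd[OF ab cd'] Ceq by simp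
        then show ?thesis using False cd' M r unfolding \<sigma>_def t Tm_mem by simp
      qed
      have key: "f a' b' (\<sigma> t) = f a b t" if "t \<in> Tm" for t
      proof -
        obtain c d M where t: "t = (c, d, M)" by (cases t) auto
        have cd: "c \<in> C" "d \<in> C" and M: "M \<in> Match' (xor_set (a \<union> c) (b \<union> d))" and r: "red i j M = M'"
          using that unfolding Tm_mem t by auto
        have X: "a \<union> c \<subseteq> A" "b \<union> d \<subseteq> A" using sub ab cd by auto
        show ?thesis
        proof (cases "S \<in> M")
          case True
          have e1: "a' \<union> c = xor_set (a \<union> c) S" "b' \<union> d = xor_set (b \<union> d) S"
            unfolding a'_def b'_def using Ssub Csub[OF cd(1)] Csub[OF cd(2)] unfolding xor_set_def by auto
          show ?thesis unfolding f_def \<sigma>_def t using True e1 I[OF X M True] by simp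
        next
          case False
          have cnd: "c \<noteq> d"
          proof
            assume "c = d"
            then have "M \<in> Match' (xor_set a b)" using M xcd[OF ab cd] by simp
            moreover have "i \<notin> xor_set a b" "j \<notin> xor_set a b" using xab[OF ab] by auto
            ultimately have "red i j M = M" using red_id by metis
            then show False using r SM' False by simp
          qed
          have M2: "M \<in> Match' (xor_set a b \<union> {i,j})" using M xcd[OF ab cd] cnd by simp
          obtain Bi Bj where B: "Bi \<in> M" "Bj \<in> M" "i \<in> Bi" "j \<in> Bj"
            and K: "{S\<in>M. i \<in> S \<or> j \<in> S} = {Bi, Bj}" and D: "Bi = Bj \<or> Bi \<inter> Bj = {}"
            using red_blocks[OF M2] by blast
          have SU: "S = (Bi \<union> Bj) - {i,j}"
            using SM' False unfolding r[symmetric] red_def K by (auto split: if_splits)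
          have Sne: "S \<noteq> {}" using Match'_block(1)[OF M' SM'] .
          have Dj: "Bi \<inter> Bj = {}"
          proof (rule ccontr)
            assume "Bi \<inter> Bj \<noteq> {}"
            then have "Bi = Bj" using D by simp
            then have "{i,j} \<subseteq> Bi" using B by auto
            moreover have "finite Bi" "card Bi \<le> 2" using Match'_block[OF M2 B(1)] by auto
            moreover have "card {i,j} = 2" using ij(3) by simp
            ultimately have "Bi = {i,j}" by (metis card_subset_eq le_antisym card_mono)
            then show False using SU Sne \<open>Bi = Bj\<close> by simp
          qed
          have BiA: "Bi \<subseteq> A" "Bj \<subseteq> A" using Match'_sub[OF M2 B(1)] Match'_sub[OF M2 B(2)] xab[OF ab] ij by auto
          have step1: "B (a \<union> c) (b \<union> d) M = B (xor_set (a \<union> c) Bi) (xor_set (b \<union> d) Bi) M"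
            by (rule I[OF X M B(1)])
          have X2: "xor_set (a \<union> c) Bi \<subseteq> A" "xor_set (b \<union> d) Bi \<subseteq> A" using xor_sub[OF X(1) BiA(1)] xor_sub[OF X(2) BiA(1)] by auto
          have M3: "M \<in> Match' (xor_set (xor_set (a \<union> c) Bi) (xor_set (b \<union> d) Bi))" using M by simp
          have step2: "B (xor_set (a \<union> c) Bi) (xor_set (b \<union> d) Bi) M =
              B (xor_set (xor_set (a \<union> c) Bi) Bj) (xor_set (xor_set (b \<union> d) Bi) Bj) M"
            by (rule I[OF X2 M3 B(2)])
          have seq: "xor_set (xor_set (u \<union> e) Bi) Bj = xor_set u S \<union> xor_set e {i,j}"
            if "u \<inter> {i,j} = {}" "e \<subseteq> {i,j}" for u e
            using that SU Dj B(3,4) unfolding xor_set_def by auto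
          have ai: "a \<inter> {i,j} = {}" "b \<inter> {i,j} = {}" using ab by auto
          show ?thesis unfolding f_def \<sigma>_def t a'_def b'_def using False step1 step2
              seq[OF ai(1) Csub[OF cd(1)]] seq[OF ai(2) Csub[OF cd(2)]] by simp
        qed
      qed
      have "BH a b M' = (\<Sum>t\<in>Tm. f a b t)" unfolding BH_def Tm_def ..
      also have "\<dots> = (\<Sum>t\<in>Tm. f a' b' t)"
        by (rule sum.reindex_bij_witness[of _ \<sigma> \<sigma>]) (use \<sigma>\<sigma> \<sigma>T key in auto)
      also have "\<dots> = BH a' b' M'" unfolding BH_def Tm_def TTeq ..
      finally show ?thesis unfolding a'_def b'_def .
    qed
  qed
qed




lemma windable_empty: "windable {} (\<lambda>a. 1)"
proof (rule windableI[of _ _ "\<lambda>_ _ _. 1"])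
  show "(1::rat) * 1 = (\<Sum>M\<in>Match' (xor_set x y). 1)" if "x \<subseteq> {}" "y \<subseteq> {}" for x y :: "'a set"
  proof -
    have "xor_set x y = {}" using that unfolding xor_set_def by auto
    then show ?thesis by (simp add: Match'_empty)
  qed
qed auto

lemma prod_windable:
  fixes Jv :: "'v \<Rightarrow> 'i set" and F :: "'v \<Rightarrow> 'i set \<Rightarrow> rat"
  assumes "finite V" "\<forall>v\<in>V. finite (Jv v)" "\<forall>v\<in>V. \<forall>w\<in>V. v \<noteq> w \<longrightarrow> Jv v \<inter> Jv w = {}"
    "\<forall>v\<in>V. windable (Jv v) (F v)"
  shows "windable (\<Union>v\<in>V. Jv v) (\<lambda>a. \<Prod>v\<in>V. F v (a \<inter> Jv v))"
  using assms
proof (induction V rule: finite_induct)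
  case empty
  then show ?case using windable_empty by simp
next
  case (insert w V)
  have IH: "windable (\<Union>v\<in>V. Jv v) (\<lambda>a. \<Prod>v\<in>V. F v (a \<inter> Jv v))"
    by (rule insert.IH) (use insert.prems in auto)
  have f1: "finite (Jv w)" using insert.prems by simp
  have f2: "finite (\<Union>v\<in>V. Jv v)" using insert.prems insert.hyps(1) by simp
  have d0: "Jv w \<inter> Jv v = {}" if "v \<in> V" for v
  proof -
    have "v \<noteq> w" using that insert.hyps(2) by auto
    then show ?thesis using insert.prems(2) that by simp
  qed
  have d: "Jv w \<inter> (\<Union>v\<in>V. Jv v) = {}" using d0 by auto
  have ww: "windable (Jv w) (F w)" using insert.prems by simp
  have T: "windable (Jv w \<union> (\<Union>v\<in>V. Jv v))
     (\<lambda>a. F w (a \<inter> Jv w) * (\<Prod>v\<in>V. F v ((a \<inter> (\<Union>v\<in>V. Jv v)) \<inter> Jv v)))"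
    by (rule tensor[OF f1 f2 d ww IH])
  have e0: "(a \<inter> (\<Union>v\<in>V. Jv v)) \<inter> Jv v = a \<inter> Jv v" if "v \<in> V" for v a
    using that by blast
  have e: "(\<Prod>v\<in>V. F v ((a \<inter> (\<Union>v\<in>V. Jv v)) \<inter> Jv v)) = (\<Prod>v\<in>V. F v (a \<inter> Jv v))" for a
    by (rule prod.cong[OF refl]) (simp add: e0)
  show ?case
    using T unfolding e prod.insert[OF insert.hyps] by simp
qed

lemma assignment_split:
  assumes "e \<in> E" "e = {i,j}"
  shows "assignment J E x \<longleftrightarrow> assignment J (E - {e}) x \<and> (i \<in> x \<longleftrightarrow> j \<in> x)"
proof -
  define Q where "Q e' = (\<forall>p\<in>e'. \<forall>q\<in>e'. (p \<in> x \<longleftrightarrow> q \<in> x))" for e'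
  have b: "(\<forall>e'\<in>E. Q e') = (Q e \<and> (\<forall>e'\<in>E - {e}. Q e'))" using assms(1) by blast
  have q: "Q e = (i \<in> x \<longleftrightarrow> j \<in> x)" unfolding Q_def assms(2) by auto
  show ?thesis unfolding assignment_def Q_def[symmetric] b q by auto
qed

lemma circuit_step:
  assumes c: "circuit J V Jv A E F" and e: "e \<in> E"
  shows "circuit J V Jv (A \<union> e) (E - {e}) F"
proof -
  have UE: "\<Union>E = J - A" and dE: "\<forall>e\<in>E. \<forall>e'\<in>E. e \<noteq> e' \<longrightarrow> e \<inter> e' = {}" and AJ: "A \<subseteq> J"
    using c unfolding circuit_def by auto
  have eJ: "e \<subseteq> J - A" using UE e by blast
  have "\<Union>(E - {e}) = \<Union>E - e"
  proof
    show "\<Union>(E - {e}) \<subseteq> \<Union>E - e" using dE e by blast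
    show "\<Union>E - e \<subseteq> \<Union>(E - {e})" by blast
  qed
  then have "\<Union>(E - {e}) = J - (A \<union> e)" using UE by auto
  moreover have "A \<union> e \<subseteq> J" using AJ eJ by auto
  ultimately show ?thesis using c unfolding circuit_def
    apply (elim conjE)
    apply (intro conjI)
    by simp_all
qed

lemma sig_split:
  assumes c: "circuit J V Jv A E F" and e: "e \<in> E" "e = {i,j}" and a: "a \<subseteq> A"
  shows "signature J V Jv A E F a =
    signature J V Jv (A \<union> e) (E - {e}) F a + signature J V Jv (A \<union> e) (E - {e}) F (a \<union> {i,j})"
proof -
  have UE: "\<Union>E = J - A" and fJ: "finite J" using c unfolding circuit_def by auto
  have eJ: "e \<subseteq> J - A" using UE e by blast
  then have iA: "i \<notin> A" "j \<notin> A" using e by auto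
  define X1 where "X1 = {x. assignment J (E - {e}) x \<and> x \<inter> (A \<union> e) = a}"
  define X2 where "X2 = {x. assignment J (E - {e}) x \<and> x \<inter> (A \<union> e) = a \<union> {i,j}}"
  have eq: "{x. assignment J E x \<and> x \<inter> A = a} = X1 \<union> X2"
  proof (rule set_eqI)
    fix x
    show "x \<in> {x. assignment J E x \<and> x \<inter> A = a} \<longleftrightarrow> x \<in> X1 \<union> X2"
      unfolding X1_def X2_def mem_Collect_eq Un_iff assignment_split[OF e, of J x] e(2)
      using a iA by blast
  qed
  have fin1: "finite X1" by (rule finite_subset[of _ "Pow J"]) (auto simp: X1_def assignment_def fJ)
  have fin2: "finite X2" by (rule finite_subset[of _ "Pow J"]) (auto simp: X2_def assignment_def fJ)
  have dis: "X1 \<inter> X2 = {}" unfolding X1_def X2_def using a iA by auto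
  show ?thesis
    unfolding signature_def eq X1_def[symmetric] X2_def[symmetric]
    by (rule sum.union_disjoint[OF fin1 fin2 dis])
qed

lemma main_ind:
  fixes F :: "'v \<Rightarrow> 'i set \<Rightarrow> rat"
  assumes w: "\<forall>v\<in>V. windable (Jv v) (F v)"
  shows "\<forall>A E. circuit J V Jv A E F \<longrightarrow> card E = n \<longrightarrow> windable A (signature J V Jv A E F)"
proof (induction n)
  case 0
  show ?case
  proof (intro allI impI)
    fix A E assume c: "circuit J V Jv A E F" and cE: "card E = 0"
    have fJ: "finite J" and UE: "\<Union>E = J - A" and AJ: "A \<subseteq> J" and fV: "finite V"
      and JvJ: "\<forall>v\<in>V. Jv v \<subseteq> J" and UJ: "(\<Union>v\<in>V. Jv v) = J"
      and dJ: "\<forall>v\<in>V. \<forall>w\<in>V. v \<noteq> w \<longrightarrow> Jv v \<inter> Jv w = {}"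
      using c unfolding circuit_def by auto
    have fE: "finite E" by (rule finite_subset[of _ "Pow J"]) (use UE fJ in auto)
    then have E0: "E = {}" using cE by simp
    then have AJ': "A = J" using UE AJ by auto
    have fJv: "\<forall>v\<in>V. finite (Jv v)" using JvJ fJ finite_subset by blast
    have P: "windable J (\<lambda>a. \<Prod>v\<in>V. F v (a \<inter> Jv v))"
      using prod_windable[OF fV fJv dJ w] UJ by simp
    show "windable A (signature J V Jv A E F)"
      unfolding AJ' E0
    proof (rule windable_cong[OF P])
      fix a assume a: "a \<subseteq> J"
      have "{x. assignment J {} x \<and> x \<inter> J = a} = {a}" using a unfolding assignment_def by auto
      then show "(\<Prod>v\<in>V. F v (a \<inter> Jv v)) = signature J V Jv J {} F a"
        unfolding signature_def wt_def by simp
    qed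
  qed
next
  case (Suc n)
  show ?case
  proof (intro allI impI)
    fix A E assume c: "circuit J V Jv A E F" and cE: "card E = Suc n"
    have fJ: "finite J" and UE: "\<Union>E = J - A" and AJ: "A \<subseteq> J" and c2: "\<forall>e\<in>E. card e = 2"
      using c unfolding circuit_def by auto
    have fE: "finite E" by (rule finite_subset[of _ "Pow J"]) (use UE fJ in auto)
    have "E \<noteq> {}" using cE by auto
    then obtain e where eE: "e \<in> E" by blast
    obtain i j where ij: "i \<noteq> j" "e = {i,j}" using c2 eE unfolding card_2_iff by blast
    have c': "circuit J V Jv (A \<union> e) (E - {e}) F" by (rule circuit_step[OF c eE])
    have cE': "card (E - {e}) = n" using cE fE eE by (simp add: card_Diff_singleton)
    have W: "windable (A \<union> e) (signature J V Jv (A \<union> e) (E - {e}) F)"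
      by (rule Suc.IH[rule_format, OF c' cE'])
    have eJ: "e \<subseteq> J - A" using UE eE by blast
    have "A \<union> e \<subseteq> J" using AJ eJ by blast
    then have fAe: "finite (A \<union> e)" using fJ by (rule finite_subset)
    have W2: "windable ((A \<union> e) - {i,j})
      (\<lambda>a. signature J V Jv (A \<union> e) (E - {e}) F a + signature J V Jv (A \<union> e) (E - {e}) F (a \<union> {i,j}))"
      by (rule contract[OF fAe W]) (use ij in auto)
    have Aeq: "(A \<union> e) - {i,j} = A" using eJ ij by auto
    show "windable A (signature J V Jv A E F)"
      by (rule windable_cong[OF W2[unfolded Aeq]]) (rule sig_split[OF c eE ij(2), symmetric])
  qed
qed

theorem lemma9:
  assumes "circuit J V Jv A E F"
    and "\<forall>v\<in>V. windable (Jv v) (F v)"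
  shows "windable A (signature J V Jv A E F)"
  by (rule main_ind[OF assms(2), rule_format, OF assms(1) refl])


end
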